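(* Let $\beta>0$, $\mu>0$ and $0<p<1$. Consider the system $$S_0'=\mu-\beta S_0A-\mu S_0,\qquad S_1'=(1-p)\beta S_0A-\beta S_1A-\mu S_1,\qquad A'=\beta(pS_0+S_1)A-\mu A$$ on the closed simplex $\Delta=\{(S_0,S_1,A): S_0,S_1,A\ge 0,\ S_0+S_1+A=1\}$. Then every solution starting in $\Delta$ converges, as $t\to\infty$, to an equilibrium point of the system. (Equivalently, for the planar system obtained by substituting $S_1=1-S_0-A$, $$S_0'=\mu-\beta S_0A-\mu S_0,\qquad A'=\beta[1-(1-p)S_0-A]A-\mu A,$$ on the region $S_0\ge0$, $A\ge0$, $S_0+A\le 1$, every trajectory approaches an equilibrium.)
   Context: This is the two-stage contagion model with permanent adoption: $S_0,S_1,A$ are the population fractions of naive, informed and adopter individuals; $\beta$ is the effective contact rate, $\mu$ the per capita demographic turnover rate, and $p$ the probability that a naive individual adopts upon first effective contact with an adopter. The simplex $\Delta$ is forward invariant. *)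

theory Defs
  imports "HOL-Analysis.Analysis"
begin

definition fS0 :: "real \<Rightarrow> real \<Rightarrow> real \<Rightarrow> real \<Rightarrow> real \<Rightarrow> real \<Rightarrow> real" where
  "fS0 \<beta> \<mu> p s0 s1 a = \<mu> - \<beta> * s0 * a - \<mu> * s0"

definition fS1 :: "real \<Rightarrow> real \<Rightarrow> real \<Rightarrow> real \<Rightarrow> real \<Rightarrow> real \<Rightarrow> real" where
  "fS1 \<beta> \<mu> p s0 s1 a = (1 - p) * \<beta> * s0 * a - \<beta> * s1 * a - \<mu> * s1"

definition fA :: "real \<Rightarrow> real \<Rightarrow> real \<Rightarrow> real \<Rightarrow> real \<Rightarrow> real \<Rightarrow> real" where
  "fA \<beta> \<mu> p s0 s1 a = \<beta> * (p * s0 + s1) * a - \<mu> * a"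

definition in_simplex :: "real \<Rightarrow> real \<Rightarrow> real \<Rightarrow> bool" where
  "in_simplex s0 s1 a \<longleftrightarrow> s0 \<ge> 0 \<and> s1 \<ge> 0 \<and> a \<ge> 0 \<and> s0 + s1 + a = 1"

definition is_equilibrium :: "real \<Rightarrow> real \<Rightarrow> real \<Rightarrow> real \<Rightarrow> real \<Rightarrow> real \<Rightarrow> bool" where
  "is_equilibrium \<beta> \<mu> p s0 s1 a \<longleftrightarrow>
     fS0 \<beta> \<mu> p s0 s1 a = 0 \<and> fS1 \<beta> \<mu> p s0 s1 a = 0 \<and> fA \<beta> \<mu> p s0 s1 a = 0"

end

theory Submission
  imports Defs
begin


lemma left_limit_nonneg:
  fixes f :: "real \<Rightarrow> real"
  assumes "isCont f s" "t0 < s" "\<And>t. t0 \<le> t \<Longrightarrow> t < s \<Longrightarrow> f t > 0"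
  shows "f s \<ge> 0"
proof -
  have "(f \<longlongrightarrow> f s) (at_left s)"
    using assms(1) by (simp add: isCont_def filterlim_at_split)
  moreover have "eventually (\<lambda>t. 0 \<le> f t) (at_left s)"
    using eventually_at_left_real[OF assms(2)] 
  proof eventually_elim
    case (elim t)
    then show ?case using assms(3)[of t] by auto
  qed
  ultimately show ?thesis
    by (rule tendsto_lowerbound) simp
qed

lemma coop_pos:
  fixes u q a b c d hu hq :: "real \<Rightarrow> real" and t0 T L :: real
  assumes "t0 \<le> T"
    and cu: "continuous_on {t0..T} u" and cq: "continuous_on {t0..T} q"
    and du: "\<And>t. t0 < t \<Longrightarrow> t \<le> T \<Longrightarrow> (u has_real_derivative (a t * u t + b t * q t + hu t)) (at t)"
    and dq: "\<And>t. t0 < t \<Longrightarrow> t \<le> T \<Longrightarrow> (q has_real_derivative (c t * u t + d t * q t + hq t)) (at t)"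
    and bnd: "\<And>t. t0 \<le> t \<Longrightarrow> t \<le> T \<Longrightarrow> b t \<ge> 0 \<and> c t \<ge> 0 \<and> hu t \<ge> 0 \<and> hq t \<ge> 0 \<and> a t + b t \<le> L \<and> c t + d t \<le> L"
    and u0: "u t0 \<ge> 0" and q0: "q t0 \<ge> 0"
  shows "u T \<ge> 0 \<and> q T \<ge> 0"
proof -
  define M where "M = L + 1"
  have main: "u T + \<epsilon> * exp (M * (T - t0)) > 0 \<and> q T + \<epsilon> * exp (M * (T - t0)) > 0" if "\<epsilon> > 0" for \<epsilon>
  proof (rule ccontr)
    define E where "E = (\<lambda>t. \<epsilon> * exp (M * (t - t0)))"
    define U where "U = (\<lambda>t. u t + E t)"
    define Q where "Q = (\<lambda>t. q t + E t)"
    have Epos: "E t > 0" for t using that by (simp add: E_def)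
    have dE: "(E has_real_derivative (M * E t)) (at t)" for t
      unfolding E_def by (auto intro!: derivative_eq_intros)
    have dU: "(U has_real_derivative (a t * u t + b t * q t + hu t + M * E t)) (at t)" if "t0 < t" "t \<le> T" for t
      unfolding U_def using du[OF that] dE by (intro derivative_intros) auto
    have dQ: "(Q has_real_derivative (c t * u t + d t * q t + hq t + M * E t)) (at t)" if "t0 < t" "t \<le> T" for t
      unfolding Q_def using dq[OF that] dE by (intro derivative_intros) auto
    have cE: "continuous_on {t0..T} E" unfolding E_def by (intro continuous_intros)
    have cU: "continuous_on {t0..T} U" unfolding U_def using cu cE by (intro continuous_intros)
    have cQ: "continuous_on {t0..T} Q" unfolding Q_def using cq cE by (intro continuous_intros)
    define Z where "Z = ({t0..T} \<inter> U -` {..0}) \<union> ({t0..T} \<inter> Q -` {..0})"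
    assume "\<not> (u T + \<epsilon> * exp (M * (T - t0)) > 0 \<and> q T + \<epsilon> * exp (M * (T - t0)) > 0)"
    then have "T \<in> Z" using \<open>t0 \<le> T\<close> by (auto simp: Z_def U_def Q_def E_def)
    then have Zne: "Z \<noteq> {}" by auto
    have Zbdd: "bdd_below Z" unfolding Z_def by (rule bdd_belowI[of _ t0]) auto
    have Zcl: "closed Z" unfolding Z_def
      by (intro closed_Un continuous_closed_preimage cU cQ closed_atLeastAtMost closed_atMost)
    define s where "s = Inf Z"
    have sZ: "s \<in> Z" unfolding s_def using closed_contains_Inf[OF Zne Zbdd Zcl] .
    have s_range: "t0 \<le> s" "s \<le> T" using sZ by (auto simp: Z_def)
    have before: "U t > 0 \<and> Q t > 0" if "t0 \<le> t" "t < s" for t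
    proof (rule ccontr)
      assume "\<not> (U t > 0 \<and> Q t > 0)"
      then have "t \<in> Z" using that s_range by (auto simp: Z_def)
      then have "s \<le> t" unfolding s_def by (rule cInf_lower[OF _ Zbdd])
      with that show False by simp
    qed
    have U0: "U t0 > 0" "Q t0 > 0" using u0 q0 Epos[of t0] by (auto simp: U_def Q_def)
    have "s \<noteq> t0" using sZ U0 by (auto simp: Z_def)
    then have st0: "t0 < s" using s_range by simp
    have Us: "U s \<ge> 0"
      by (rule left_limit_nonneg[OF DERIV_isCont[OF dU[OF st0 s_range(2)]] st0]) (use before in auto)
    have Qs: "Q s \<ge> 0"
      by (rule left_limit_nonneg[OF DERIV_isCont[OF dQ[OF st0 s_range(2)]] st0]) (use before in auto)
    have B: "b s \<ge> 0" "c s \<ge> 0" "hu s \<ge> 0" "hq s \<ge> 0" "a s + b s \<le> L" "c s + d s \<le> L"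
      using bnd[OF s_range] by auto
    have contra: False if D: "(F has_real_derivative l) (at s)" and l: "l > 0" and Fs: "F s = 0"
      and Fpos: "\<And>t. t0 \<le> t \<Longrightarrow> t < s \<Longrightarrow> F t > 0" for F l
    proof -
      obtain dd where dd: "dd > 0" "\<And>h. h > 0 \<Longrightarrow> h < dd \<Longrightarrow> F (s - h) < F s"
        using DERIV_pos_inc_left[OF D l] by blast
      define h where "h = min (dd/2) (s - t0)"
      have "h > 0" "h < dd" using dd st0 by (auto simp: h_def)
      then have "F (s - h) < 0" using dd Fs by auto
      moreover have "F (s - h) > 0" using Fpos[of "s - h"] \<open>h > 0\<close> by (auto simp: h_def)
      ultimately show False by simp
    qed
    have "U s = 0 \<or> Q s = 0" using sZ Us Qs by (auto simp: Z_def)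
    then show False
    proof
      assume U: "U s = 0"
      then have "u s = - E s" by (simp add: U_def)
      moreover have "q s = Q s - E s" by (simp add: Q_def)
      ultimately have "a s * u s + b s * q s + hu s + M * E s = a s * (- E s) + b s * (Q s - E s) + hu s + M * E s"
        by simp
      also have "\<dots> = b s * Q s + hu s + (M - a s - b s) * E s"
        by (simp add: algebra_simps)
      also have "\<dots> > 0"
      proof -
        have "(M - a s - b s) * E s > 0" using B Epos[of s] by (simp add: M_def)
        moreover have "b s * Q s \<ge> 0" using B Qs by simp
        ultimately show ?thesis using B by linarith
      qed
      finally show False
        using contra[OF dU[OF st0 s_range(2)] _ U] before by blast
    next
      assume Q: "Q s = 0"
      then have "q s = - E s" by (simp add: Q_def)
      moreover have "u s = U s - E s" by (simp add: U_def)
      ultimately have "c s * u s + d s * q s + hq s + M * E s = c s * (U s - E s) + d s * (- E s) + hq s + M * E s"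
        by simp
      also have "\<dots> = c s * U s + hq s + (M - c s - d s) * E s"
        by (simp add: algebra_simps)
      also have "\<dots> > 0"
      proof -
        have "(M - c s - d s) * E s > 0" using B Epos[of s] by (simp add: M_def)
        moreover have "c s * U s \<ge> 0" using B Us by simp
        ultimately show ?thesis using B by linarith
      qed
      finally show False
        using contra[OF dQ[OF st0 s_range(2)] _ Q] before by blast
    qed
  qed
  have lim: "x \<ge> 0" if "\<And>\<epsilon>. \<epsilon> > 0 \<Longrightarrow> x + \<epsilon> * exp (M * (T - t0)) > 0" for x :: real
  proof (rule ccontr)
    assume "\<not> x \<ge> 0"
    define \<epsilon> where "\<epsilon> = - x / (2 * exp (M * (T - t0)))"
    have "\<epsilon> > 0" using \<open>\<not> x \<ge> 0\<close> by (simp add: \<epsilon>_def divide_neg_pos)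
    have "\<epsilon> * exp (M * (T - t0)) = - x / 2" by (simp add: \<epsilon>_def)
    with that[OF \<open>\<epsilon> > 0\<close>] \<open>\<not> x \<ge> 0\<close> show False by simp
  qed
  show ?thesis using main lim by blast
qed

lemma scalar_pos:
  fixes u a h :: "real \<Rightarrow> real" and t0 T L :: real
  assumes "t0 \<le> T" "continuous_on {t0..T} u"
    and "\<And>t. t0 < t \<Longrightarrow> t \<le> T \<Longrightarrow> (u has_real_derivative (a t * u t + h t)) (at t)"
    and "\<And>t. t0 \<le> t \<Longrightarrow> t \<le> T \<Longrightarrow> h t \<ge> 0 \<and> a t \<le> L" and "u t0 \<ge> 0"
  shows "u T \<ge> 0"
proof -
  have "u T \<ge> 0 \<and> (\<lambda>_. 1::real) T \<ge> 0"
  proof (rule coop_pos[of t0 T u "\<lambda>_. 1" a "\<lambda>_. 0" h "\<lambda>_. 0" "\<lambda>_. 0" "\<lambda>_. 0" "max L 0"])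
    fix t assume "t0 < t" "t \<le> T"
    show "(u has_real_derivative (a t * u t + 0 * 1 + h t)) (at t)"
      using assms(3)[OF \<open>t0 < t\<close> \<open>t \<le> T\<close>] by simp
    show "((\<lambda>_. 1::real) has_real_derivative (0 * u t + 0 * 1 + 0)) (at t)"
      by simp
  qed (use assms in \<open>auto simp: le_max_iff_disj\<close>)
  then show ?thesis by simp
qed

lemma const_sign:
  fixes f :: "real \<Rightarrow> real"
  assumes "continuous_on {t0..} f" "\<And>t. t \<ge> t0 \<Longrightarrow> f t \<noteq> 0"
  shows "(\<forall>t\<ge>t0. f t > 0) \<or> (\<forall>t\<ge>t0. f t < 0)"
proof (rule ccontr)
  assume "\<not> ?thesis"
  then obtain t1 t2 where t: "t1 \<ge> t0" "t2 \<ge> t0" "f t1 \<le> 0" "f t2 \<ge> 0"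
    by (auto simp: not_less)
  have c: "continuous_on {x..y} f" if "x \<ge> t0" for x y
    using assms(1) by (rule continuous_on_subset) (use that in auto)
  show False
  proof (cases "t1 \<le> t2")
    case True
    then obtain x where "t1 \<le> x" "x \<le> t2" "f x = 0"
      using IVT'[of f t1 0 t2] c[OF t(1)] t by auto
    then show False using assms(2)[of x] t by auto
  next
    case False
    then obtain x where "t2 \<le> x" "x \<le> t1" "f x = 0"
      using IVT2'[of f t1 0 t2] c[OF t(2)] t by auto
    then show False using assms(2)[of x] t by auto
  qed
qed

lemma mono_conv_up:
  fixes f g :: "real \<Rightarrow> real"
  assumes d: "\<And>t. t > t0 \<Longrightarrow> (f has_real_derivative g t) (at t)"
    and g: "\<And>t. t > t0 \<Longrightarrow> g t \<ge> 0" and B: "\<And>t. t > t0 \<Longrightarrow> f t \<le> B"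
  shows "\<exists>L. (f \<longlongrightarrow> L) at_top"
proof -
  have mono: "f x \<le> f y" if "t0 < x" "x \<le> y" for x y
  proof (rule DERIV_nonneg_imp_increasing_open[OF \<open>x \<le> y\<close>])
    fix z assume "x < z" "z < y"
    then show "\<exists>l. (f has_real_derivative l) (at z) \<and> l \<ge> 0"
      using d g that by (meson less_trans)
  next
    show "continuous_on {x..y} f"
    proof (rule continuous_at_imp_continuous_on, intro ballI)
      fix z assume "z \<in> {x..y}"
      then show "isCont f z" using d[of z] that DERIV_isCont by auto
    qed
  qed
  define S where "S = f ` {t0+1..}"
  have Sne: "S \<noteq> {}" by (auto simp: S_def)
  have Sbdd: "bdd_above S" unfolding S_def by (rule bdd_aboveI[of _ B]) (use B in auto)
  define L where "L = Sup S"
  have "(f \<longlongrightarrow> L) at_top"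
  proof (rule order_tendstoI)
    fix a assume "a < L"
    then obtain s where "s \<in> S" "a < s" using less_cSup_iff[OF Sne Sbdd] by (auto simp: L_def)
    then obtain t1 where t1: "t1 \<ge> t0 + 1" "a < f t1" by (auto simp: S_def)
    show "eventually (\<lambda>t. a < f t) at_top"
      unfolding eventually_at_top_linorder
      by (rule exI[of _ t1]) (use t1 mono in \<open>auto intro: less_le_trans\<close>)
  next
    fix a assume "L < a"
    have "f t \<le> L" if "t \<ge> t0 + 1" for t
      unfolding L_def by (rule cSup_upper[OF _ Sbdd]) (use that in \<open>auto simp: S_def\<close>)
    then show "eventually (\<lambda>t. f t < a) at_top"
      unfolding eventually_at_top_linorder using \<open>L < a\<close> by (auto intro: le_less_trans)
  qed
  then show ?thesis by blast
qed

lemma mono_conv: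
  fixes f g :: "real \<Rightarrow> real"
  assumes d: "\<And>t. t > t0 \<Longrightarrow> (f has_real_derivative g t) (at t)"
    and g: "(\<forall>t\<ge>t0. g t \<ge> 0) \<or> (\<forall>t\<ge>t0. g t \<le> 0)" and B: "\<And>t. t > t0 \<Longrightarrow> \<bar>f t\<bar> \<le> B"
  shows "\<exists>L. (f \<longlongrightarrow> L) at_top"
  using g
proof
  assume "\<forall>t\<ge>t0. g t \<ge> 0"
  then show ?thesis using mono_conv_up[of t0 f g B] d B by (auto simp: abs_le_iff)
next
  assume "\<forall>t\<ge>t0. g t \<le> 0"
  then have "\<exists>L. ((\<lambda>t. - f t) \<longlongrightarrow> L) at_top"
    using mono_conv_up[of t0 "\<lambda>t. - f t" "\<lambda>t. - g t" B] d B
    by (auto simp: abs_le_iff intro!: derivative_intros)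
  then obtain L where "((\<lambda>t. - f t) \<longlongrightarrow> L) at_top" by blast
  then have "((\<lambda>t. - (- f t)) \<longlongrightarrow> - L) at_top" by (intro tendsto_intros)
  then show ?thesis by auto
qed

lemma deriv_lim_pos:
  fixes f g :: "real \<Rightarrow> real"
  assumes d: "\<And>t. t > t0 \<Longrightarrow> (f has_real_derivative g t) (at t)"
    and fL: "(f \<longlongrightarrow> L) at_top" and gc: "(g \<longlongrightarrow> c) at_top"
  shows "\<not> c > 0"
proof
  assume c: "c > 0"
  have "eventually (\<lambda>t. g t > c/2) at_top" using order_tendstoD(1)[OF gc, of "c/2"] c by simp
  moreover have "eventually (\<lambda>t. f t < L + 1) at_top" using order_tendstoD(2)[OF fL] by simp
  moreover have "eventually (\<lambda>t. t > t0) at_top" by (rule eventually_gt_at_top)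
  ultimately have "eventually (\<lambda>t. g t > c/2 \<and> f t < L + 1 \<and> t > t0) at_top"
    by eventually_elim auto
  then obtain t1 where t1: "\<And>t. t \<ge> t1 \<Longrightarrow> g t > c/2 \<and> f t < L + 1 \<and> t > t0"
    unfolding eventually_at_top_linorder by blast
  define t where "t = max t1 (t1 + 2 * (L + 1 - f t1) / c)"
  have "t \<ge> t1" by (simp add: t_def)
  have "(\<lambda>x. f x - c/2 * x) t1 \<le> (\<lambda>x. f x - c/2 * x) t"
  proof (rule DERIV_nonneg_imp_increasing_open[OF \<open>t \<ge> t1\<close>])
    fix z assume "t1 < z" "z < t"
    then have "((\<lambda>x. f x - c/2 * x) has_real_derivative g z - c/2) (at z)"
      using d t1[of z] by (auto intro!: derivative_eq_intros)
    then show "\<exists>l. ((\<lambda>x. f x - c/2 * x) has_real_derivative l) (at z) \<and> l \<ge> 0"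
      using t1[of z] \<open>t1 < z\<close> by force
  next
    have "isCont (\<lambda>x. f x - c/2 * x) z" if "z \<ge> t1" for z
      using DERIV_isCont[OF d[of z]] t1[of z] that by (auto intro!: continuous_intros)
    then show "continuous_on {t1..t} (\<lambda>x. f x - c/2 * x)"
      by (intro continuous_at_imp_continuous_on) auto
  qed
  then have "f t \<ge> f t1 + c/2 * (t - t1)" by (simp add: algebra_simps diff_divide_distrib)
  moreover have "c/2 * (t - t1) \<ge> L + 1 - f t1"
  proof -
    have "t - t1 \<ge> 2 * (L + 1 - f t1) / c" by (simp add: t_def)
    then have "c/2 * (t - t1) \<ge> c/2 * (2 * (L + 1 - f t1) / c)"
      using c by (intro mult_left_mono) auto
    also have "c/2 * (2 * (L + 1 - f t1) / c) = L + 1 - f t1" using c by simp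
    finally show ?thesis .
  qed
  ultimately have "f t \<ge> L + 1" by simp
  with t1[OF \<open>t \<ge> t1\<close>] show False by simp
qed

lemma deriv_lim:
  fixes f g :: "real \<Rightarrow> real"
  assumes d: "\<And>t. t > t0 \<Longrightarrow> (f has_real_derivative g t) (at t)"
    and fL: "(f \<longlongrightarrow> L) at_top" and gc: "(g \<longlongrightarrow> c) at_top"
  shows "c = 0"
proof -
  have "\<not> c > 0" by (rule deriv_lim_pos[OF d fL gc])
  moreover have "\<not> - c > 0"
  proof (rule deriv_lim_pos[of t0 "\<lambda>t. - f t" "\<lambda>t. - g t"])
    show "((\<lambda>t. - f t) has_real_derivative - g t) (at t)" if "t > t0" for t
      using d[OF that] by (rule derivative_intros)
  qed (use fL gc in \<open>auto intro: tendsto_intros\<close>)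
  ultimately show ?thesis by simp
qed



theorem proposition1:
  fixes \<beta> \<mu> p :: real and S0 S1 A :: "real \<Rightarrow> real"
  assumes "\<beta> > 0" and "\<mu> > 0" and "0 < p" and "p < 1"
    and "\<And>t. t \<ge> 0 \<Longrightarrow> (S0 has_real_derivative fS0 \<beta> \<mu> p (S0 t) (S1 t) (A t)) (at t within {0..})"
    and "\<And>t. t \<ge> 0 \<Longrightarrow> (S1 has_real_derivative fS1 \<beta> \<mu> p (S0 t) (S1 t) (A t)) (at t within {0..})"
    and "\<And>t. t \<ge> 0 \<Longrightarrow> (A has_real_derivative fA \<beta> \<mu> p (S0 t) (S1 t) (A t)) (at t within {0..})"
    and "in_simplex (S0 0) (S1 0) (A 0)"
  shows "\<exists>e0 e1 ea. is_equilibrium \<beta> \<mu> p e0 e1 ea \<and>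
           (S0 \<longlongrightarrow> e0) at_top \<and> (S1 \<longlongrightarrow> e1) at_top \<and> (A \<longlongrightarrow> ea) at_top"
proof -
  note b0 = assms(1) and m0 = assms(2) and p0 = assms(3) and p1 = assms(4)
  note dS0w = assms(5) and dS1w = assms(6) and dAw = assms(7) and init = assms(8)
  define F0 where "F0 = (\<lambda>t. fS0 \<beta> \<mu> p (S0 t) (S1 t) (A t))"
  define F1 where "F1 = (\<lambda>t. fS1 \<beta> \<mu> p (S0 t) (S1 t) (A t))"
  define FA where "FA = (\<lambda>t. fA \<beta> \<mu> p (S0 t) (S1 t) (A t))"
  have atd: "(f has_real_derivative D) (at t)"
    if "(f has_real_derivative D) (at t within {0..})" "t > 0" for f D and t :: real
  proof -
    have "(f has_real_derivative D) (at t within {0<..})"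
      using that(1) by (rule has_field_derivative_subset) auto
    moreover have "at t within {0<..} = at t"
      by (rule at_within_open) (use that(2) in auto)
    ultimately show ?thesis by simp
  qed
  have dS0: "(S0 has_real_derivative F0 t) (at t)" if "t > 0" for t
    unfolding F0_def using atd[OF dS0w that] that by simp
  have dS1: "(S1 has_real_derivative F1 t) (at t)" if "t > 0" for t
    unfolding F1_def using atd[OF dS1w that] that by simp
  have dA: "(A has_real_derivative FA t) (at t)" if "t > 0" for t
    unfolding FA_def using atd[OF dAw that] that by simp
  have cS0: "continuous_on {0..} S0"
    unfolding continuous_on_eq_continuous_within using DERIV_continuous[OF dS0w] by auto
  have cS1: "continuous_on {0..} S1"
    unfolding continuous_on_eq_continuous_within using DERIV_continuous[OF dS1w] by auto
  have cA: "continuous_on {0..} A"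
    unfolding continuous_on_eq_continuous_within using DERIV_continuous[OF dAw] by auto
  have cS0T: "continuous_on {t0..T} S0" "continuous_on {t0..T} S1" "continuous_on {t0..T} A"
    if "t0 \<ge> 0" for t0 T
    using continuous_on_subset[OF cS0, of "{t0..T}"] continuous_on_subset[OF cS1, of "{t0..T}"]
      continuous_on_subset[OF cA, of "{t0..T}"] that by auto
  have init': "S0 0 \<ge> 0" "S1 0 \<ge> 0" "A 0 \<ge> 0" "S0 0 + S1 0 + A 0 = 1"
    using init by (auto simp: in_simplex_def)

  define y where "y = (\<lambda>t. S0 t + S1 t + A t - 1)"
  have dy: "(y has_real_derivative (- \<mu>) * y t + 0) (at t)" if "t > 0" for t
  proof -
    have "(y has_real_derivative F0 t + F1 t + FA t) (at t)"
      unfolding y_def using dS0[OF that] dS1[OF that] dA[OF that]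
      by (auto intro!: derivative_eq_intros)
    moreover have "F0 t + F1 t + FA t = (- \<mu>) * y t + 0"
      by (simp add: F0_def F1_def FA_def fS0_def fS1_def fA_def y_def algebra_simps)
    ultimately show ?thesis by simp
  qed
  have cy: "continuous_on {0..T} y" for T
    unfolding y_def using cS0T[of 0 T] by (intro continuous_intros) auto
  have N: "S0 t + S1 t + A t = 1" if "t \<ge> 0" for t
  proof -
    have "y t \<ge> 0"
      by (rule scalar_pos[of 0 t y "\<lambda>_. - \<mu>" "\<lambda>_. 0" 0]) (use that cy dy m0 init' in \<open>auto simp: y_def\<close>)
    moreover have "(\<lambda>t. - y t) t \<ge> 0"
    proof (rule scalar_pos[of 0 t "\<lambda>t. - y t" "\<lambda>_. - \<mu>" "\<lambda>_. 0" 0])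
      fix s assume "0 < s" "s \<le> t"
      show "((\<lambda>t. - y t) has_real_derivative (- \<mu>) * (- y s) + 0) (at s)"
        using dy[OF \<open>0 < s\<close>] DERIV_minus by fastforce
    next
      show "continuous_on {0..t} (\<lambda>t. - y t)" using cy[of t] by (rule continuous_on_minus)
    qed (use that cy m0 init' in \<open>auto simp: y_def intro: continuous_intros\<close>)
    ultimately show ?thesis by (simp add: y_def)
  qed

  have Apos: "A t \<ge> 0" if "t \<ge> 0" for t
  proof -
    define g where "g = (\<lambda>t. \<beta> * (p * S0 t + S1 t) - \<mu>)"
    have cg: "continuous_on {0..t} g" unfolding g_def using cS0T[of 0 t]
      by (intro continuous_intros) auto
    have "{0..t} \<noteq> {}" using that by simp
    from continuous_attains_sup[OF compact_Icc this cg]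
    obtain x where "x \<in> {0..t}" "\<And>z. z \<in> {0..t} \<Longrightarrow> g z \<le> g x"
      by blast
    then show ?thesis
    proof (intro scalar_pos[of 0 t A g "\<lambda>_. 0" "g x"])
      fix s assume "0 < s" "s \<le> t"
      have "FA s = g s * A s + 0" by (simp add: FA_def fA_def g_def algebra_simps)
      then show "(A has_real_derivative g s * A s + 0) (at s)" using dA[OF \<open>0 < s\<close>] by simp
    qed (use that cS0T[of 0 t] init' in auto)
  qed
  have S0pos: "S0 t \<ge> 0" if "t \<ge> 0" for t
  proof (rule scalar_pos[of 0 t S0 "\<lambda>s. - (\<beta> * A s + \<mu>)" "\<lambda>_. \<mu>" 0])
    fix s assume "0 < s" "s \<le> t"
    have "F0 s = - (\<beta> * A s + \<mu>) * S0 s + \<mu>" by (simp add: F0_def fS0_def algebra_simps)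
    then show "(S0 has_real_derivative - (\<beta> * A s + \<mu>) * S0 s + \<mu>) (at s)" using dS0[OF \<open>0 < s\<close>] by simp
  next
    fix s assume "0 \<le> s" "s \<le> t"
    then have "\<beta> * A s \<ge> 0" using Apos[of s] b0 by simp
    then show "\<mu> \<ge> 0 \<and> - (\<beta> * A s + \<mu>) \<le> 0" using m0 by simp
  qed (use that cS0T[of 0 t] init' in auto)
  have S1pos: "S1 t \<ge> 0" if "t \<ge> 0" for t
  proof (rule scalar_pos[of 0 t S1 "\<lambda>s. - (\<beta> * A s + \<mu>)" "\<lambda>s. (1 - p) * \<beta> * S0 s * A s" 0])
    fix s assume "0 < s" "s \<le> t"
    have "F1 s = - (\<beta> * A s + \<mu>) * S1 s + (1 - p) * \<beta> * S0 s * A s" by (simp add: F1_def fS1_def algebra_simps)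
    then show "(S1 has_real_derivative - (\<beta> * A s + \<mu>) * S1 s + (1 - p) * \<beta> * S0 s * A s) (at s)"
      using dS1[OF \<open>0 < s\<close>] by simp
  next
    fix s assume "0 \<le> s" "s \<le> t"
    then have "\<beta> * A s \<ge> 0" "S0 s \<ge> 0" "A s \<ge> 0" using Apos[of s] S0pos[of s] b0 by simp_all
    moreover have "(1 - p) * \<beta> \<ge> 0" using p1 b0 by simp
    ultimately show "(1 - p) * \<beta> * S0 s * A s \<ge> 0 \<and> - (\<beta> * A s + \<mu>) \<le> 0"
      using m0 by simp
  qed (use that cS0T[of 0 t] init' in auto)

  define q where "q = (\<lambda>t. - FA t)"
  have du: "(F0 has_real_derivative (- (\<beta> * A t + \<mu>)) * F0 t + (\<beta> * S0 t) * q t + 0) (at t)"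
    if "t > 0" for t
  proof -
    have "((\<lambda>t. \<mu> - \<beta> * S0 t * A t - \<mu> * S0 t) has_real_derivative - \<beta> * (F0 t * A t + S0 t * FA t) - \<mu> * F0 t) (at t)"
      using dS0[OF that] dA[OF that]
      by (auto intro!: derivative_eq_intros simp: algebra_simps)
    moreover have "(\<lambda>t. \<mu> - \<beta> * S0 t * A t - \<mu> * S0 t) = F0" by (auto simp: F0_def fS0_def)
    ultimately have "(F0 has_real_derivative - \<beta> * (F0 t * A t + S0 t * FA t) - \<mu> * F0 t) (at t)"
      by simp
    moreover have "- \<beta> * (F0 t * A t + S0 t * FA t) - \<mu> * F0 t
        = (- (\<beta> * A t + \<mu>)) * F0 t + (\<beta> * S0 t) * q t + 0"
      by (simp add: q_def algebra_simps)
    ultimately show ?thesis by simp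
  qed
  have dq: "(q has_real_derivative ((1 - p) * \<beta> * A t) * F0 t + (\<beta> * (p * S0 t + S1 t) - \<mu> - \<beta> * A t) * q t + 0) (at t)"
    if "t > 0" for t
  proof -
    have "((\<lambda>t. - (\<beta> * (p * S0 t + S1 t) * A t - \<mu> * A t)) has_real_derivative - (\<beta> * (p * F0 t + F1 t) * A t + \<beta> * (p * S0 t + S1 t) * FA t - \<mu> * FA t)) (at t)"
      using dS0[OF that] dS1[OF that] dA[OF that]
      by (auto intro!: derivative_eq_intros simp: algebra_simps)
    moreover have "(\<lambda>t. - (\<beta> * (p * S0 t + S1 t) * A t - \<mu> * A t)) = q" by (auto simp: q_def FA_def fA_def)
    ultimately have "(q has_real_derivative - (\<beta> * (p * F0 t + F1 t) * A t + \<beta> * (p * S0 t + S1 t) * FA t - \<mu> * FA t)) (at t)"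
      by simp
    moreover have "F0 t + F1 t + FA t = \<mu> * (1 - (S0 t + S1 t + A t))"
      by (simp add: F0_def F1_def FA_def fS0_def fS1_def fA_def algebra_simps)
    then have "F0 t + F1 t + FA t = 0" using N[of t] that by simp
    then have F1e: "F1 t = - F0 t - FA t" by simp
    have "- (\<beta> * (p * F0 t + F1 t) * A t + \<beta> * (p * S0 t + S1 t) * FA t - \<mu> * FA t)
        = ((1 - p) * \<beta> * A t) * F0 t + (\<beta> * (p * S0 t + S1 t) - \<mu> - \<beta> * A t) * q t + 0"
      unfolding F1e by (simp add: q_def algebra_simps)
    ultimately show ?thesis by simp
  qed

  have cF0: "continuous_on {t0..T} F0" "continuous_on {t0..T} q" if "t0 \<ge> 0" for t0 T
    using cS0T[OF that, of T] unfolding F0_def fS0_def q_def FA_def fA_def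
    by (auto intro!: continuous_intros)
  have S0le: "S0 t \<le> 1" "A t \<le> 1" "S1 t \<le> 1" if "t \<ge> 0" for t
    using N[OF that] S0pos[OF that] S1pos[OF that] Apos[OF that] by linarith+
  have bnds: "\<beta> * S0 t \<ge> 0 \<and> (1 - p) * \<beta> * A t \<ge> 0 \<and> (0::real) \<ge> 0 \<and> (0::real) \<ge> 0 \<and>
      - (\<beta> * A t + \<mu>) + \<beta> * S0 t \<le> \<beta> \<and>
      (1 - p) * \<beta> * A t + (\<beta> * (p * S0 t + S1 t) - \<mu> - \<beta> * A t) \<le> \<beta>" if "t \<ge> 0" for t
  proof -
    note h = S0pos[OF that] S1pos[OF that] Apos[OF that] S0le[OF that] N[OF that]
    have "\<beta> * S0 t \<le> \<beta>" using h b0 by (simp add: mult_left_le)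
    moreover have "\<beta> * A t \<ge> 0" "\<beta> * S0 t \<ge> 0" using h b0 by simp_all
    moreover have "p * S0 t \<le> S0 t" using mult_right_mono[of p 1 "S0 t"] h p1 by simp
    then have "p * S0 t + S1 t \<le> 1" using h by linarith
    then have "\<beta> * (p * S0 t + S1 t) \<le> \<beta>" using b0 by (simp add: mult_left_le)
    moreover have "(1 - p) * \<beta> * A t \<ge> 0" using h b0 p1 by simp
    moreover have "p * (\<beta> * A t) \<ge> 0" using h b0 p0 by simp
    moreover have "(1 - p) * \<beta> * A t + (\<beta> * (p * S0 t + S1 t) - \<mu> - \<beta> * A t)
        = \<beta> * (p * S0 t + S1 t) - \<mu> - p * (\<beta> * A t)" by (simp add: algebra_simps)
    ultimately show ?thesis using m0 by linarith
  qed
  have inv: "F0 T \<ge> 0 \<and> q T \<ge> 0" if "0 \<le> t0" "t0 \<le> T" "F0 t0 \<ge> 0" "q t0 \<ge> 0" for t0 T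
  proof (rule coop_pos[of t0 T F0 q "\<lambda>t. - (\<beta> * A t + \<mu>)" "\<lambda>t. \<beta> * S0 t" "\<lambda>_. 0"
        "\<lambda>t. (1 - p) * \<beta> * A t" "\<lambda>t. \<beta> * (p * S0 t + S1 t) - \<mu> - \<beta> * A t" "\<lambda>_. 0" \<beta>])
    fix t assume "t0 < t" "t \<le> T"
    then have "t > 0" using that by simp
    show "(F0 has_real_derivative (- (\<beta> * A t + \<mu>)) * F0 t + (\<beta> * S0 t) * q t + 0) (at t)"
      using du[OF \<open>t > 0\<close>] .
    show "(q has_real_derivative ((1 - p) * \<beta> * A t) * F0 t + (\<beta> * (p * S0 t + S1 t) - \<mu> - \<beta> * A t) * q t + 0) (at t)"
      using dq[OF \<open>t > 0\<close>] .
  next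
    fix t assume "t0 \<le> t" "t \<le> T"
    then show "\<beta> * S0 t \<ge> 0 \<and> (1 - p) * \<beta> * A t \<ge> 0 \<and> (0::real) \<ge> 0 \<and> (0::real) \<ge> 0 \<and>
      - (\<beta> * A t + \<mu>) + \<beta> * S0 t \<le> \<beta> \<and>
      (1 - p) * \<beta> * A t + (\<beta> * (p * S0 t + S1 t) - \<mu> - \<beta> * A t) \<le> \<beta>"
      using bnds[of t] that by simp
  qed (use that cF0[OF that(1)] in auto)
  have inv': "F0 T \<le> 0 \<and> q T \<le> 0" if "0 \<le> t0" "t0 \<le> T" "F0 t0 \<le> 0" "q t0 \<le> 0" for t0 T
  proof -
    have "(\<lambda>t. - F0 t) T \<ge> 0 \<and> (\<lambda>t. - q t) T \<ge> 0"
    proof (rule coop_pos[of t0 T "\<lambda>t. - F0 t" "\<lambda>t. - q t" "\<lambda>t. - (\<beta> * A t + \<mu>)" "\<lambda>t. \<beta> * S0 t" "\<lambda>_. 0"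
          "\<lambda>t. (1 - p) * \<beta> * A t" "\<lambda>t. \<beta> * (p * S0 t + S1 t) - \<mu> - \<beta> * A t" "\<lambda>_. 0" \<beta>])
      fix t assume "t0 < t" "t \<le> T"
      then have "t > 0" using that by simp
      have "((\<lambda>t. - F0 t) has_real_derivative - ((- (\<beta> * A t + \<mu>)) * F0 t + (\<beta> * S0 t) * q t + 0)) (at t)"
        using du[OF \<open>t > 0\<close>] by (rule DERIV_minus)
      then show "((\<lambda>t. - F0 t) has_real_derivative (- (\<beta> * A t + \<mu>)) * (- F0 t) + (\<beta> * S0 t) * (- q t) + 0) (at t)"
        by (simp add: algebra_simps)
      have "((\<lambda>t. - q t) has_real_derivative - (((1 - p) * \<beta> * A t) * F0 t + (\<beta> * (p * S0 t + S1 t) - \<mu> - \<beta> * A t) * q t + 0)) (at t)"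
        using dq[OF \<open>t > 0\<close>] by (rule DERIV_minus)
      then show "((\<lambda>t. - q t) has_real_derivative ((1 - p) * \<beta> * A t) * (- F0 t) + (\<beta> * (p * S0 t + S1 t) - \<mu> - \<beta> * A t) * (- q t) + 0) (at t)"
        by (simp add: algebra_simps)
    next
      fix t assume "t0 \<le> t" "t \<le> T"
      then show "\<beta> * S0 t \<ge> 0 \<and> (1 - p) * \<beta> * A t \<ge> 0 \<and> (0::real) \<ge> 0 \<and> (0::real) \<ge> 0 \<and>
        - (\<beta> * A t + \<mu>) + \<beta> * S0 t \<le> \<beta> \<and>
        (1 - p) * \<beta> * A t + (\<beta> * (p * S0 t + S1 t) - \<mu> - \<beta> * A t) \<le> \<beta>"
        using bnds[of t] that by simp
    qed (use that cF0[OF that(1)] in \<open>auto intro: continuous_on_minus\<close>)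
    then show ?thesis by simp
  qed
  have ev: "\<exists>t0\<ge>0. ((\<forall>t\<ge>t0. F0 t \<ge> 0) \<or> (\<forall>t\<ge>t0. F0 t \<le> 0)) \<and> ((\<forall>t\<ge>t0. q t \<ge> 0) \<or> (\<forall>t\<ge>t0. q t \<le> 0))"
  proof (cases "\<exists>t0\<ge>0. F0 t0 * q t0 \<ge> 0")
    case True
    then obtain t0 where t0: "t0 \<ge> 0" "F0 t0 * q t0 \<ge> 0" by blast
    then have "(F0 t0 \<ge> 0 \<and> q t0 \<ge> 0) \<or> (F0 t0 \<le> 0 \<and> q t0 \<le> 0)"
      by (auto simp: zero_le_mult_iff)
    then show ?thesis
    proof
      assume "F0 t0 \<ge> 0 \<and> q t0 \<ge> 0"
      then show ?thesis using inv[of t0] t0 by blast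
    next
      assume "F0 t0 \<le> 0 \<and> q t0 \<le> 0"
      then show ?thesis using inv'[of t0] t0 by blast
    qed
  next
    case False
    then have neg: "F0 t * q t < 0" if "t \<ge> 0" for t using that by (meson not_le)
    have cc: "continuous_on {0..} F0" "continuous_on {0..} q"
      using cS0 cS1 cA unfolding F0_def fS0_def q_def FA_def fA_def
      by (auto intro!: continuous_intros)
    have "(\<forall>t\<ge>0. F0 t > 0) \<or> (\<forall>t\<ge>0. F0 t < 0)"
      by (rule const_sign[OF cc(1)]) (use neg in force)
    moreover have "(\<forall>t\<ge>0. q t > 0) \<or> (\<forall>t\<ge>0. q t < 0)"
      by (rule const_sign[OF cc(2)]) (use neg in force)
    ultimately show ?thesis by (intro exI[of _ 0]) (auto simp: less_imp_le)
  qed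
  then obtain t0 where t0: "t0 \<ge> 0" "(\<forall>t\<ge>t0. F0 t \<ge> 0) \<or> (\<forall>t\<ge>t0. F0 t \<le> 0)"
    "(\<forall>t\<ge>t0. q t \<ge> 0) \<or> (\<forall>t\<ge>t0. q t \<le> 0)" by blast
  have "\<exists>L. (S0 \<longlongrightarrow> L) at_top"
    by (rule mono_conv[of t0 S0 F0 1]) (use t0 dS0 S0pos S0le in auto)
  then obtain e0 where e0: "(S0 \<longlongrightarrow> e0) at_top" by blast
  have gA: "(\<forall>t\<ge>t0. FA t \<ge> 0) \<or> (\<forall>t\<ge>t0. FA t \<le> 0)"
    using t0(3) by (auto simp: q_def)
  have "\<exists>L. (A \<longlongrightarrow> L) at_top"
    by (rule mono_conv[of t0 A FA 1]) (use t0 dA Apos S0le gA in auto)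
  then obtain ea where ea: "(A \<longlongrightarrow> ea) at_top" by blast
  define e1 where "e1 = 1 - e0 - ea"
  have "((\<lambda>t. 1 - S0 t - A t) \<longlongrightarrow> e1) at_top"
    unfolding e1_def by (intro tendsto_intros e0 ea)
  moreover have "eventually (\<lambda>t. 1 - S0 t - A t = S1 t) at_top"
    unfolding eventually_at_top_linorder using N by (intro exI[of _ 0]) (auto simp: algebra_simps)
  ultimately have e1: "(S1 \<longlongrightarrow> e1) at_top" by (simp add: tendsto_cong)
  have "(F0 \<longlongrightarrow> fS0 \<beta> \<mu> p e0 e1 ea) at_top"
    unfolding F0_def fS0_def by (intro tendsto_intros e0 e1 ea)
  then have z0: "fS0 \<beta> \<mu> p e0 e1 ea = 0"
    using deriv_lim[of 0 S0 F0 e0, OF dS0 e0] by blast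
  have "(FA \<longlongrightarrow> fA \<beta> \<mu> p e0 e1 ea) at_top"
    unfolding FA_def fA_def by (intro tendsto_intros e0 e1 ea)
  then have zA: "fA \<beta> \<mu> p e0 e1 ea = 0"
    using deriv_lim[of 0 A FA ea, OF dA ea] by blast
  have "fS1 \<beta> \<mu> p e0 e1 ea = \<mu> * (1 - (e0 + e1 + ea)) - fS0 \<beta> \<mu> p e0 e1 ea - fA \<beta> \<mu> p e0 e1 ea"
    by (simp add: fS0_def fS1_def fA_def algebra_simps)
  then have z1: "fS1 \<beta> \<mu> p e0 e1 ea = 0" using z0 zA by (simp add: e1_def)
  show ?thesis
    using z0 z1 zA e0 e1 ea unfolding is_equilibrium_def by blast
qed
end
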